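(* Let $X\in\sigma\mathcal F$ with $\mathsf{rk}(X)\ge n$, where $n\in\omega$. Then every $A\in\mathcal F$ with $|A|\le n$ embeds into $X$.
   Context: Let $\mathcal L$ be a countable relational language without constants and $\mathcal F$ a hereditary, isomorphism-closed class of finite $\mathcal L$-structures. $\sigma\mathcal F$ is the class of countable structures isomorphic to unions of chains in $\mathcal F$; $\mathsf{age}(X)$ is the set of finite (induced) substructures of $X$. For $A\le B$, $B$ is a prime extension of $A$ if $|B\setminus A|=1$; a realization of $B$ in $X$ (where $A\le X$) is $C\le X$ with $A\le C$ and an isomorphism $B\to C$ fixing $A$ pointwise. For $F\in\mathsf{age}(X)$ define by recursion: $\mathsf{rk}_X(F)\ge0$ always; $\mathsf{rk}_X(F)\ge\alpha+1$ iff every prime extension $B\in\mathcal F$ of $F$ has a realization $C$ in $X$ with $\mathsf{rk}_X(C)\ge\alpha$; for limit $\alpha$, $\mathsf{rk}_X(F)\ge\alpha$ iff $\mathsf{rk}_X(F)\ge\beta$ for all $\beta<\alpha$. $\mathsf{rk}_X(F)=\sup\{\alpha:\mathsf{rk}_X(F)\ge\alpha\}$ (or $\infty$), and $\mathsf{rk}(X)=\mathsf{rk}_X(\emptyset)$. *)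

theory Defs
  imports Main "HOL-Library.Countable" "HOL-Library.Countable_Set"
begin

text \<open>A relation is interpreted as a set of tuples (lists of the right length).\<close>

record ('a, 'r) lstruct =
  univ :: "'a set"
  rels :: "'r \<Rightarrow> 'a list set"

definition wf_struct :: "('r \<Rightarrow> nat) \<Rightarrow> ('a, 'r) lstruct \<Rightarrow> bool" where
  "wf_struct ar S \<longleftrightarrow>
     (\<forall>r. \<forall>xs \<in> rels S r. length xs = ar r \<and> set xs \<subseteq> univ S)"

definition induced :: "('a, 'r) lstruct \<Rightarrow> 'a set \<Rightarrow> ('a, 'r) lstruct" where
  "induced S U = \<lparr> univ = U, rels = (\<lambda>r. {xs \<in> rels S r. set xs \<subseteq> U}) \<rparr>"

definition substr :: "('a, 'r) lstruct \<Rightarrow> ('a, 'r) lstruct \<Rightarrow> bool" where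
  "substr A B \<longleftrightarrow> univ A \<subseteq> univ B \<and>
     (\<forall>r. rels A r = {xs \<in> rels B r. set xs \<subseteq> univ A})"

definition iso :: "('a \<Rightarrow> 'a) \<Rightarrow> ('a, 'r) lstruct \<Rightarrow> ('a, 'r) lstruct \<Rightarrow> bool" where
  "iso f A B \<longleftrightarrow> bij_betw f (univ A) (univ B) \<and>
     (\<forall>r xs. set xs \<subseteq> univ A \<longrightarrow> (xs \<in> rels A r \<longleftrightarrow> map f xs \<in> rels B r))"

definition good_class :: "('r \<Rightarrow> nat) \<Rightarrow> ('a, 'r) lstruct set \<Rightarrow> bool" where
  "good_class ar \<F> \<longleftrightarrow>
     (\<forall>S \<in> \<F>. wf_struct ar S \<and> finite (univ S)) \<and>
     (\<forall>S \<in> \<F>. \<forall>T. substr T S \<longrightarrow> T \<in> \<F>) \<and>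
     (\<forall>S \<in> \<F>. \<forall>T f. wf_struct ar T \<and> iso f S T \<longrightarrow> T \<in> \<F>)"

definition union_struct :: "('a, 'r) lstruct set \<Rightarrow> ('a, 'r) lstruct" where
  "union_struct C = \<lparr> univ = (\<Union>S\<in>C. univ S), rels = (\<lambda>r. \<Union>S\<in>C. rels S r) \<rparr>"

definition sigma_class :: "('r \<Rightarrow> nat) \<Rightarrow> ('a, 'r) lstruct set \<Rightarrow> ('a, 'r) lstruct set" where
  "sigma_class ar \<F> = {X. wf_struct ar X \<and> countable (univ X) \<and>
     (\<exists>C. C \<subseteq> \<F> \<and> (\<forall>A\<in>C. \<forall>B\<in>C. substr A B \<or> substr B A) \<and>
          (\<exists>f. iso f (union_struct C) X))}"

definition age :: "('a, 'r) lstruct \<Rightarrow> ('a, 'r) lstruct set" where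
  "age X = {F. substr F X \<and> finite (univ F)}"

definition prime_ext :: "('a, 'r) lstruct \<Rightarrow> ('a, 'r) lstruct \<Rightarrow> bool" where
  "prime_ext A B \<longleftrightarrow> substr A B \<and> card (univ B - univ A) = 1"

definition realization :: "('a, 'r) lstruct \<Rightarrow> ('a, 'r) lstruct \<Rightarrow> ('a, 'r) lstruct
    \<Rightarrow> ('a, 'r) lstruct \<Rightarrow> bool" where
  "realization X A B C \<longleftrightarrow> substr C X \<and> substr A C \<and>
     (\<exists>f. iso f B C \<and> (\<forall>a\<in>univ A. f a = a))"

text \<open>rank_ge F X A n  means  rk_X(A) \<ge> n, for finite n (the finite stages of the
  ordinal recursion; limit stages are not needed for finite n).\<close>
primrec rank_ge :: "('a, 'r) lstruct set \<Rightarrow> ('a, 'r) lstruct \<Rightarrow> ('a, 'r) lstruct \<Rightarrow> nat \<Rightarrow> bool" where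
  "rank_ge \<F> X A 0 = True"
| "rank_ge \<F> X A (Suc n) =
     (\<forall>B \<in> \<F>. prime_ext A B \<longrightarrow> (\<exists>C. realization X A B C \<and> rank_ge \<F> X C n))"

definition struct_rank_ge :: "('a, 'r) lstruct set \<Rightarrow> ('a, 'r) lstruct \<Rightarrow> nat \<Rightarrow> bool" where
  "struct_rank_ge \<F> X n = rank_ge \<F> X (induced X {}) n"

definition embeds :: "('a, 'r) lstruct \<Rightarrow> ('a, 'r) lstruct \<Rightarrow> bool" where
  "embeds A X \<longleftrightarrow> (\<exists>C f. substr C X \<and> iso f A C)"

end

theory Submission
  imports Defs
begin

lemma iso_comp:
  assumes "iso h S T" "iso f T U" shows "iso (f \<circ> h) S U"
proof -
  have bh: "bij_betw h (univ S) (univ T)" and bf: "bij_betw f (univ T) (univ U)"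
    using assms by (auto simp: iso_def)
  show ?thesis unfolding iso_def
  proof (intro conjI allI impI)
    show "bij_betw (f \<circ> h) (univ S) (univ U)" using bh bf bij_betw_trans by blast
  next
    fix r xs assume xs: "set xs \<subseteq> univ S"
    hence "set (map h xs) \<subseteq> univ T" using bh by (auto simp: bij_betw_def)
    thus "(xs \<in> rels S r) = (map (f \<circ> h) xs \<in> rels U r)"
      using assms xs by (auto simp: iso_def)
  qed
qed

lemma iso_image:
  assumes "inj_on h (univ S)" "wf_struct ar S"
  shows "iso h S \<lparr>univ = h ` univ S, rels = (\<lambda>r. map h ` rels S r)\<rparr>"
    and "wf_struct ar \<lparr>univ = h ` univ S, rels = (\<lambda>r. map h ` rels S r)\<rparr>"
proof -
  show "iso h S \<lparr>univ = h ` univ S, rels = (\<lambda>r. map h ` rels S r)\<rparr>"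
    unfolding iso_def
  proof (intro conjI allI impI)
    show "bij_betw h (univ S) (univ \<lparr>univ = h ` univ S, rels = \<lambda>r. map h ` rels S r\<rparr>)"
      using assms(1) by (simp add: bij_betw_def)
  next
    fix r xs assume xs: "set xs \<subseteq> univ S"
    show "(xs \<in> rels S r) = (map h xs \<in> rels \<lparr>univ = h ` univ S, rels = \<lambda>r. map h ` rels S r\<rparr> r)"
    proof
      assume "map h xs \<in> rels \<lparr>univ = h ` univ S, rels = \<lambda>r. map h ` rels S r\<rparr> r"
      then obtain ys where ys: "ys \<in> rels S r" "map h xs = map h ys" by auto
      have "set ys \<subseteq> univ S" using ys(1) assms(2) by (auto simp: wf_struct_def)
      hence "set xs \<union> set ys \<subseteq> univ S" using xs by auto
      hence "inj_on h (set xs \<union> set ys)" using assms(1) by (rule inj_on_subset[rotated])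
      hence "xs = ys" using ys(2) inj_on_map_eq_map by blast
      thus "xs \<in> rels S r" using ys by simp
    qed simp
  qed
  show "wf_struct ar \<lparr>univ = h ` univ S, rels = (\<lambda>r. map h ` rels S r)\<rparr>"
    using assms(2) by (auto simp: wf_struct_def)
qed

lemma induced_substr:
  assumes "wf_struct ar A" "E \<subseteq> univ A"
  shows "substr (induced A E) A" "wf_struct ar (induced A E)"
  using assms by (auto simp: substr_def induced_def wf_struct_def)

lemma full_iso:
  assumes "wf_struct ar A" "iso g (induced A (univ A)) C"
  shows "iso g A C"
  using assms by (auto simp: iso_def induced_def wf_struct_def)

lemma substr_wf:
  assumes "wf_struct ar X" "substr C X" shows "wf_struct ar C"
  using assms by (auto simp: substr_def wf_struct_def)

lemma main:
  assumes inf: "infinite (UNIV :: 'a set)"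
    and good: "good_class ar \<F>"
    and wfX: "wf_struct ar X"
    and AF: "A \<in> \<F>"
  shows "D \<subseteq> univ A \<Longrightarrow> iso g (induced A D) C \<Longrightarrow> substr C X
     \<Longrightarrow> rank_ge \<F> X C m \<Longrightarrow> card (univ A - D) \<le> m \<Longrightarrow> embeds A (X :: ('a,'r) lstruct)"
proof (induction m arbitrary: D C g)
  have wfA: "wf_struct ar A" and finA: "finite (univ A)" using good AF unfolding good_class_def by blast+
  case 0
  hence "D = univ A" using finA by auto
  thus ?case using 0(2,3) full_iso[OF wfA] unfolding embeds_def by blast
next
  have wfA: "wf_struct ar A" and finA: "finite (univ A)" using good AF unfolding good_class_def by blast+
  case (Suc m)
  show ?case
  proof (cases "D = univ A")
    case True
    thus ?thesis using Suc(3,4) full_iso[OF wfA] unfolding embeds_def by blast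
  next
    case False
    then obtain a where a: "a \<in> univ A" "a \<notin> D" using Suc by auto
    have bg: "bij_betw g D (univ C)" using Suc(3) by (simp add: iso_def induced_def)
    have finD: "finite D" using Suc(2) finA finite_subset by blast
    hence finC: "finite (univ C)" using bg bij_betw_finite by blast
    obtain b where b: "b \<notin> univ C" using inf finC ex_new_if_finite by blast
    define h where "h = g(a := b)"
    define E where "E = insert a D"
    define S where "S = induced A E"
    define B where "B = \<lparr>univ = h ` univ S, rels = (\<lambda>r. map h ` rels S r)\<rparr>"
    have E: "E \<subseteq> univ A" using a Suc(2) by (auto simp: E_def)
    have SF: "S \<in> \<F>" using induced_substr[OF wfA E] good AF unfolding S_def good_class_def by blast
    have wfS: "wf_struct ar S" using induced_substr[OF wfA E] by (simp add: S_def)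
    have uS: "univ S = E" by (simp add: S_def induced_def)
    have hD: "\<forall>x\<in>D. h x = g x" using a by (auto simp: h_def)
    have gD: "g ` D = univ C" using bg by (simp add: bij_betw_def)
    have injh: "inj_on h (univ S)"
    proof -
      have "inj_on g D" using bg by (simp add: bij_betw_def)
      moreover have "inj_on h D = inj_on g D" using hD by (intro inj_on_cong) auto
      ultimately have "inj_on h D" by simp
      moreover have "h a \<notin> h ` D" using hD gD b by (auto simp: h_def)
      ultimately show ?thesis using a(2) by (simp add: uS E_def)
    qed
    have isoB: "iso h S B" and wfB: "wf_struct ar B"
      using iso_image[OF injh wfS] by (simp_all add: B_def)
    have BF: "B \<in> \<F>" using good SF isoB wfB unfolding good_class_def by blast
    have uB: "univ B = insert b (univ C)"
    proof -
      have "h ` D = g ` D" using hD by (intro image_cong) auto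
      moreover have "univ B = insert (h a) (h ` D)" by (simp add: B_def uS E_def)
      moreover have "h a = b" by (simp add: h_def)
      ultimately show ?thesis using gD by simp
    qed
    have wfC: "wf_struct ar C" using substr_wf[OF wfX Suc(4)] .
    have relC: "rels C r = {xs \<in> rels B r. set xs \<subseteq> univ C}" for r
    proof
      show "rels C r \<subseteq> {xs \<in> rels B r. set xs \<subseteq> univ C}"
      proof
        fix xs assume xs: "xs \<in> rels C r"
        hence sx: "set xs \<subseteq> univ C" using wfC by (auto simp: wf_struct_def)
        define ys where "ys = map (inv_into D g) xs"
        have ysD: "set ys \<subseteq> D" using sx gD by (auto simp: ys_def inv_into_into)
        have xy: "map g ys = xs" unfolding ys_def map_map
        proof (rule map_idI)
          fix x assume "x \<in> set xs"
          hence "x \<in> g ` D" using sx gD by auto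
          thus "(g \<circ> inv_into D g) x = x" by (simp add: f_inv_into_f)
        qed
        have "ys \<in> rels (induced A D) r" using Suc(3) ysD xy xs by (auto simp: iso_def induced_def)
        hence "ys \<in> rels S r" using ysD by (auto simp: induced_def S_def E_def)
        moreover have "map h ys = xs" using xy ysD hD by (auto intro: map_cong)
        ultimately show "xs \<in> {xs \<in> rels B r. set xs \<subseteq> univ C}" using sx by (auto simp: B_def)
      qed
    next
      show "{xs \<in> rels B r. set xs \<subseteq> univ C} \<subseteq> rels C r"
      proof
        fix xs assume "xs \<in> {xs \<in> rels B r. set xs \<subseteq> univ C}"
        then obtain ys where ys: "ys \<in> rels S r" "xs = map h ys" and sx: "set xs \<subseteq> univ C"
          by (auto simp: B_def)
        have ysE: "set ys \<subseteq> E" using ys wfS uS by (auto simp: wf_struct_def)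
        have "a \<notin> set ys"
        proof
          assume "a \<in> set ys" hence "b \<in> set xs" using ys by (auto simp: h_def)
          thus False using sx b by auto
        qed
        hence ysD: "set ys \<subseteq> D" using ysE by (auto simp: E_def)
        hence "xs = map g ys" using ys hD by (auto intro: map_cong)
        moreover have "ys \<in> rels (induced A D) r" using ys ysD by (auto simp: S_def induced_def)
        ultimately show "xs \<in> rels C r" using Suc(3) ysD by (auto simp: iso_def induced_def)
      qed
    qed
    have "univ B - univ C = {b}" using uB b by auto
    hence pe: "prime_ext C B" using uB relC by (auto simp: prime_ext_def substr_def)
    obtain C' where C': "realization X C B C'" "rank_ge \<F> X C' m"
      using Suc(5) BF pe by auto
    obtain f where f: "iso f B C'" and sC': "substr C' X" using C'(1) by (auto simp: realization_def)
    have "iso (f \<circ> h) (induced A E) C'" using iso_comp[OF isoB f] by (simp add: S_def)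
    moreover have "card (univ A - E) \<le> m"
    proof -
      have "univ A - D = insert a (univ A - E)" using a by (auto simp: E_def)
      moreover have "a \<notin> univ A - E" by (simp add: E_def)
      ultimately have "card (univ A - D) = Suc (card (univ A - E))" using finA by simp
      thus ?thesis using Suc(6) by simp
    qed
    ultimately show ?thesis using Suc.IH[OF E _ sC' C'(2)] by blast
  qed
qed

theorem proposition3p1:
  fixes ar :: "'r::countable \<Rightarrow> nat"
    and \<F> :: "('a, 'r) lstruct set"
    and X A :: "('a, 'r) lstruct"
    and n :: nat
  assumes "infinite (UNIV :: 'a set)"
    and "\<forall>r. 0 < ar r"
    and "good_class ar \<F>"
    and "X \<in> sigma_class ar \<F>"
    and "struct_rank_ge \<F> X n"
    and "A \<in> \<F>"
    and "card (univ A) \<le> n"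
  shows "embeds A X"
proof -
  have wfX: "wf_struct ar X" using assms(4) by (simp add: sigma_class_def)
  have wfA: "wf_struct ar A" using assms(3,6) unfolding good_class_def by blast
  have nil: "[] \<notin> rels S r" if "wf_struct ar S" for S :: "('a,'r) lstruct" and r
  proof
    assume "[] \<in> rels S r"
    hence "length ([] :: 'a list) = ar r" using that unfolding wf_struct_def by blast
    thus False using spec[OF assms(2), of r] by simp
  qed
  have iso0: "iso g (induced A {}) (induced X {})" for g
    unfolding iso_def induced_def using nil[OF wfA] nil[OF wfX] by (simp add: bij_betw_def)
  have s0: "substr (induced X {}) X" using induced_substr[OF wfX] by simp
  show ?thesis
    using main[OF assms(1,3) wfX assms(6) _ iso0 s0, of n] assms(5,7)
    unfolding struct_rank_ge_def by simp
qed

end
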